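(* Let $r\in\mathbb{N}$ with $r\ge2$, let $u,v,w\in\mathbb{YF}^r$, and let $i,j\in\{1,\dots,r\}$ with $i\ne j$. Then $$d_r(w1_iu,\,v1_ju)\le d_r(w1_iu,\,v2u),$$ where juxtaposition denotes concatenation of words.
   Context: Fix $r\in\mathbb{N}$. Words. Vertices of $\mathbb{YF}^r$ are finite words over $\{1_1,\dots,1_r,2\}$. A letter $1_i$ is a one with digit value $1$; $2$ is a two with digit value $2$. $|x|$ is the digit sum. The graph $\mathbb{YF}^r$. It is graded by $|\cdot|$. From $x$ there is a downward edge to every word obtained by one of two operations: (i) delete the leftmost one; (ii) replace a $2$ lying left of the leftmost one (any $2$ if there are no ones) by $1_i$, with arbitrary $i$. Path counts. $d_r(x,y)$ is the number of downward paths $y=y_n\to\dots\to y_m=x$ in $\mathbb{YF}^r$ with $|y_i|=i$ ($0$ if none). *)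

theory Defs
  imports Main
begin

datatype letter = One nat | Two

type_synonym word = "letter list"

fun digit :: "letter \<Rightarrow> nat" where
  "digit (One i) = 1"
| "digit Two = 2"

definition dsum :: "word \<Rightarrow> nat" where
  "dsum x = (\<Sum>a\<leftarrow>x. digit a)"

definition in_YF :: "nat \<Rightarrow> word \<Rightarrow> bool" where
  "in_YF r x \<longleftrightarrow> (\<forall>a\<in>set x. a = Two \<or> (\<exists>i. a = One i \<and> 1 \<le> i \<and> i \<le> r))"

definition down :: "nat \<Rightarrow> word \<Rightarrow> word \<Rightarrow> bool" where
  "down r x y \<longleftrightarrow>
     (\<exists>p k s. x = p @ One k # s \<and> set p \<subseteq> {Two} \<and> y = p @ s) \<or>
     (\<exists>p s i. x = p @ Two # s \<and> set p \<subseteq> {Two} \<and> 1 \<le> i \<and> i \<le> r \<and> y = p @ One i # s)"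

definition d :: "nat \<Rightarrow> word \<Rightarrow> word \<Rightarrow> nat" where
  "d r x y = card {ps. ps \<noteq> [] \<and> hd ps = y \<and> last ps = x \<and>
      (\<forall>k < length ps. dsum (ps ! k) = dsum y - k) \<and>
      (\<forall>k. Suc k < length ps \<longrightarrow> down r (ps ! k) (ps ! Suc k))}"

end

theory Submission
  imports Defs
begin

lemma dsum_simps[simp]: "dsum [] = 0" "dsum (a # xs) = digit a + dsum xs" "dsum (xs @ ys) = dsum xs + dsum ys"
  by (simp_all add: dsum_def)

lemma digit_pos: "digit a \<ge> 1" by (cases a) auto

lemma dsum_zero: "dsum z = 0 \<Longrightarrow> z = []"
  using digit_pos by (cases z) (auto simp: dsum_def, metis add_is_0 digit_pos not_one_le_zero)

lemma down_nil: "\<not> down r [] z" by (auto simp: down_def)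

lemma down_set: "down r a b \<Longrightarrow> set b \<subseteq> set a \<union> {Two} \<union> One ` {..r} \<and> length b \<le> length a"
  by (auto simp: down_def)

lemma downA:
  assumes "down r (q @ One j # u) z"
  shows "(\<exists>q'. z = q' @ One j # u \<and> down r (q @ Two # u) (q' @ Two # u)) \<or> (set q \<subseteq> {Two} \<and> z = q @ u)"
  using assms[unfolded down_def]
proof (elim disjE)
  assume "\<exists>p k s. q @ One j # u = p @ One k # s \<and> set p \<subseteq> {Two} \<and> z = p @ s"
  then obtain p k s where e: "q @ One j # u = p @ One k # s" and p: "set p \<subseteq> {Two}" and z: "z = p @ s" by blast
  from e obtain us where "q = p @ us \<and> us @ One j # u = One k # s \<or> q @ us = p \<and> One j # u = us @ One k # s"
    by (auto simp: append_eq_append_conv2)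
  then show ?thesis
  proof
    assume h: "q = p @ us \<and> us @ One j # u = One k # s"
    show ?thesis
    proof (cases us)
      case Nil then show ?thesis using h p z by auto
    next
      case (Cons a us') 
      then have "s = us' @ One j # u" "a = One k" using h by auto
      then show ?thesis using h p z Cons
        by (auto simp: down_def)
    qed
  next
    assume h: "q @ us = p \<and> One j # u = us @ One k # s"
    show ?thesis
    proof (cases us)
      case Nil then show ?thesis using h p z by auto
    next
      case (Cons a us') then show ?thesis using h p by auto
    qed
  qed
next
  assume "\<exists>p s i. q @ One j # u = p @ Two # s \<and> set p \<subseteq> {Two} \<and> 1 \<le> i \<and> i \<le> r \<and> z = p @ One i # s"
  then obtain p s i where e: "q @ One j # u = p @ Two # s" and p: "set p \<subseteq> {Two}" and i: "1 \<le> i" "i \<le> r" and z: "z = p @ One i # s" by blast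
  from e obtain us where "q = p @ us \<and> us @ One j # u = Two # s \<or> q @ us = p \<and> One j # u = us @ Two # s"
    by (auto simp: append_eq_append_conv2)
  then show ?thesis
  proof
    assume h: "q = p @ us \<and> us @ One j # u = Two # s"
    show ?thesis
    proof (cases us)
      case Nil then show ?thesis using h p z by auto
    next
      case (Cons a us') 
      then have "s = us' @ One j # u" "a = Two" using h by auto
      then show ?thesis using h p z Cons i
        by (auto simp: down_def) (metis append.assoc append_Cons)
    qed
  next
    assume h: "q @ us = p \<and> One j # u = us @ Two # s"
    show ?thesis
    proof (cases us)
      case Nil then show ?thesis using h p z by auto
    next
      case (Cons a us') then show ?thesis using h p by auto
    qed
  qed
qed

lemma twos_ne: "set q \<subseteq> {Two} \<Longrightarrow> q @ u \<noteq> q' @ One j # u"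
proof
  assume s: "set q \<subseteq> {Two}" and e: "q @ u = q' @ One j # u"
  then have "length q = Suc (length q')" using arg_cong[OF e, of length] by simp
  then obtain q0 where "q = q0 @ [last q]" "length q0 = length q'"
    by (metis append_butlast_last_id length_butlast list.size(3) nat.distinct(1) diff_Suc_1)
  with e s show False by (auto simp: append_eq_append_conv)
qed

definition P :: "nat \<Rightarrow> word \<Rightarrow> word \<Rightarrow> word list set" where
  "P r x y = {ps. ps \<noteq> [] \<and> hd ps = y \<and> last ps = x \<and>
      (\<forall>k < length ps. dsum (ps ! k) = dsum y - k) \<and>
      (\<forall>k. Suc k < length ps \<longrightarrow> down r (ps ! k) (ps ! Suc k))}"

lemma d_P: "d r x y = card (P r x y)" by (simp add: d_def P_def)

lemma path_elems:
  assumes "ps \<in> P r x y"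
  shows "k < length ps \<Longrightarrow> set (ps ! k) \<subseteq> set y \<union> {Two} \<union> One ` {..r} \<and> length (ps ! k) \<le> length y"
proof (induction k)
  case 0
  then show ?case using assms by (auto simp: P_def hd_conv_nth[symmetric])
next
  case (Suc k)
  then have "down r (ps ! k) (ps ! Suc k)" using assms by (auto simp: P_def)
  from down_set[OF this] Suc show ?case by auto
qed

lemma path_len:
  assumes "ps \<in> P r x y" shows "length ps \<le> dsum y + 1"
proof (rule ccontr)
  assume "\<not> ?thesis"
  then have l: "Suc (dsum y) < length ps" by simp
  then have "dsum (ps ! dsum y) = 0" using assms by (auto simp: P_def)
  then have "ps ! dsum y = []" by (rule dsum_zero)
  moreover have "down r (ps ! dsum y) (ps ! Suc (dsum y))" using assms l by (auto simp: P_def)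
  ultimately show False using down_nil by simp
qed

lemma P_finite: "finite (P r x y)"
proof -
  define L where "L = set y \<union> {Two} \<union> One ` {..r}"
  define W where "W = {z. set z \<subseteq> L \<and> length z \<le> length y}"
  have fL: "finite L" by (simp add: L_def)
  have fW: "finite W" unfolding W_def by (rule finite_lists_length_le[OF fL])
  have "P r x y \<subseteq> {ps. set ps \<subseteq> W \<and> length ps \<le> dsum y + 1}"
  proof
    fix ps assume ps: "ps \<in> P r x y"
    have "set ps \<subseteq> W"
    proof
      fix z assume "z \<in> set ps"
      then obtain k where "k < length ps" "z = ps ! k" by (auto simp: in_set_conv_nth)
      with path_elems[OF ps] show "z \<in> W" by (auto simp: W_def L_def)
    qed
    with path_len[OF ps] show "ps \<in> {ps. set ps \<subseteq> W \<and> length ps \<le> dsum y + 1}" by simp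
  qed
  moreover have "finite {ps. set ps \<subseteq> W \<and> length ps \<le> dsum y + 1}"
    by (rule finite_lists_length_le[OF fW])
  ultimately show ?thesis by (rule finite_subset)
qed

lemma mid_eq: "q @ a # u = q' @ b # u \<Longrightarrow> q = q' \<and> a = b"
proof -
  assume e: "q @ a # u = q' @ b # u"
  then have "length q = length q'" using arg_cong[OF e, of length] by simp
  with e show ?thesis by (auto simp: append_eq_append_conv)
qed

lemma F_nth:
  assumes "t < length ps" "k \<le> length ps"
  shows "(map f (take (Suc t) ps) @ drop t ps) ! k = (if k \<le> t then f (ps ! k) else ps ! (k - 1))"
proof (cases "k \<le> t")
  case True then show ?thesis using assms by (simp add: nth_append min_def)
next
  case False
  have l: "length (map f (take (Suc t) ps)) = Suc t" using assms by simp
  have "(map f (take (Suc t) ps) @ drop t ps) ! k = drop t ps ! (k - Suc t)"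
    using False by (simp only: nth_append l) simp
  also have "\<dots> = ps ! (t + (k - Suc t))" using assms by (intro nth_drop) simp
  also have "t + (k - Suc t) = k - 1" using False by simp
  finally show ?thesis using False by simp
qed

lemma F_len:
  assumes "t < length ps"
  shows "length (map f (take (Suc t) ps) @ drop t ps) = Suc (length ps)"
  using assms by auto


theorem mainTheorem10:
  fixes r i j :: nat and u v w :: word
  assumes "r \<ge> 2"
    and "in_YF r u" and "in_YF r v" and "in_YF r w"
    and "1 \<le> i" and "i \<le> r" and "1 \<le> j" and "j \<le> r" and "i \<noteq> j"
  shows "d r (w @ One i # u) (v @ One j # u) \<le> d r (w @ One i # u) (v @ Two # u)"
proof -
  define x where "x = w @ One i # u"
  define y1 where "y1 = v @ One j # u"
  define y2 where "y2 = v @ Two # u"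
  define form where "form z \<longleftrightarrow> (\<exists>q. z = q @ One j # u)" for z
  define sw where "sw z = take (length z - Suc (length u)) z @ Two # u" for z
  define tt where "tt ps = (LEAST k. \<not> form (ps ! Suc k))" for ps :: "word list"
  define F where "F ps = map sw (take (Suc (tt ps)) ps) @ drop (tt ps) ps" for ps
  have sw_eq: "sw (q @ One j # u) = q @ Two # u" for q by (simp add: sw_def)
  have nfx: "\<not> form x" using assms(9) by (auto simp: form_def x_def dest: mid_eq)
  have nf2: "\<not> form (q @ Two # u)" for q by (auto simp: form_def dest: mid_eq)
  have dy: "dsum y2 = Suc (dsum y1)" by (simp add: y1_def y2_def)
  have props: "Suc (tt ps) < length ps \<and> \<not> form (ps ! Suc (tt ps)) \<and> (\<forall>k \<le> tt ps. form (ps ! k))"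
    if ps: "ps \<in> P r x y1" for ps
  proof -
    have ne: "ps \<noteq> []" and h: "hd ps = y1" and l: "last ps = x" using ps by (auto simp: P_def)
    have "length ps \<noteq> 1"
    proof
      assume "length ps = 1"
      then obtain a where "ps = [a]" by (cases ps) auto
      then show False using h l nfx by (auto simp: form_def y1_def)
    qed
    moreover have "length ps \<noteq> 0" using ne by simp
    ultimately have len: "length ps \<ge> 2" by linarith
    define k0 where "k0 = length ps - 2"
    have "ps ! Suc k0 = last ps" using len ne by (simp add: last_conv_nth k0_def Suc_diff_Suc numeral_2_eq_2)
    then have nk0: "\<not> form (ps ! Suc k0)" using l nfx by simp
    have "tt ps \<le> k0" unfolding tt_def by (rule Least_le) (rule nk0)
    moreover have "\<not> form (ps ! Suc (tt ps))" unfolding tt_def by (rule LeastI) (rule nk0)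
    moreover have "form (ps ! k)" if "k \<le> tt ps" for k
    proof (cases k)
      case 0 then show ?thesis using ne h by (simp add: hd_conv_nth[symmetric] form_def y1_def)
    next
      case (Suc k')
      then have "k' < tt ps" using that by simp
      then show ?thesis unfolding Suc tt_def by (rule not_less_Least[THEN notnotD])
    qed
    ultimately show ?thesis using len by (auto simp: k0_def)
  qed
  have Fn: "F ps ! k = (if k \<le> tt ps then sw (ps ! k) else ps ! (k - 1))"
    "length (F ps) = Suc (length ps)"
    if "ps \<in> P r x y1" "k \<le> length ps" for ps k
  proof -
    have "tt ps < length ps" using props[OF that(1)] by simp
    then show "F ps ! k = (if k \<le> tt ps then sw (ps ! k) else ps ! (k - 1))"
      "length (F ps) = Suc (length ps)"
      unfolding F_def using F_nth[OF _ that(2)] F_len by blast+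
  qed
  have img: "F ` P r x y1 \<subseteq> P r x y2"
  proof
    fix ps' assume "ps' \<in> F ` P r x y1"
    then obtain ps where ps: "ps \<in> P r x y1" and ps': "ps' = F ps" by blast
    note pr = props[OF ps]
    have ne: "ps \<noteq> []" and h: "hd ps = y1" and l: "last ps = x"
      and ds: "\<And>k. k < length ps \<Longrightarrow> dsum (ps ! k) = dsum y1 - k"
      and dn: "\<And>k. Suc k < length ps \<Longrightarrow> down r (ps ! k) (ps ! Suc k)"
      using ps by (auto simp: P_def)
    have lenF: "length (F ps) = Suc (length ps)" using Fn(2)[OF ps, of 0] by simp
    have Fk: "F ps ! k = (if k \<le> tt ps then sw (ps ! k) else ps ! (k - 1))" if "k \<le> length ps" for k
      using Fn(1)[OF ps that] .
    have fq: "\<exists>q. ps ! k = q @ One j # u" if "k \<le> tt ps" for k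
      using pr that unfolding form_def by blast
    have "F ps \<noteq> []" using lenF by auto
    moreover have "hd (F ps) = y2"
    proof -
      have "ps ! 0 = y1" using ne h by (simp add: hd_conv_nth[symmetric])
      then show ?thesis using Fk[of 0] \<open>F ps \<noteq> []\<close> by (simp add: hd_conv_nth y1_def y2_def sw_eq)
    qed
    moreover have "last (F ps) = x"
    proof -
      have "last (F ps) = F ps ! length ps" using lenF \<open>F ps \<noteq> []\<close> by (simp add: last_conv_nth)
      also have "\<dots> = ps ! (length ps - 1)" using Fk[of "length ps"] pr by simp
      also have "\<dots> = x" using l ne by (simp add: last_conv_nth)
      finally show ?thesis .
    qed
    moreover have "\<forall>k < length (F ps). dsum (F ps ! k) = dsum y2 - k"
    proof (intro allI impI)
      fix k assume k: "k < length (F ps)"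
      show "dsum (F ps ! k) = dsum y2 - k"
      proof (cases "k \<le> tt ps")
        case True
        obtain q where q: "ps ! k = q @ One j # u" using fq[OF True] by blast
        have "k < length ps" using True pr by simp
        then have "dsum (ps ! k) = dsum y1 - k" by (rule ds)
        then show ?thesis using Fk[of k] True pr q dy by (simp add: sw_eq)
      next
        case False
        then have "k - 1 < length ps" using k lenF by simp
        then have "dsum (ps ! (k - 1)) = dsum y1 - (k - 1)" by (rule ds)
        then show ?thesis using Fk[of k] False k lenF dy by simp
      qed
    qed
    moreover have "\<forall>k. Suc k < length (F ps) \<longrightarrow> down r (F ps ! k) (F ps ! Suc k)"
    proof (intro allI impI)
      fix k assume k: "Suc k < length (F ps)"
      consider "Suc k \<le> tt ps" | "k = tt ps" | "k > tt ps" by linarith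
      then show "down r (F ps ! k) (F ps ! Suc k)"
      proof cases
        case 1
        obtain q where q: "ps ! k = q @ One j # u" using fq[of k] 1 by fastforce
        obtain q' where q': "ps ! Suc k = q' @ One j # u" using fq 1 by auto
        have "down r (ps ! k) (ps ! Suc k)" using 1 pr by (intro dn) simp
        then have "down r (q @ Two # u) (q' @ Two # u)"
          using downA[of r q j u "ps ! Suc k"] q q' twos_ne[of q u q' j] by (auto dest: mid_eq)
        then show ?thesis using Fk[of k] Fk[of "Suc k"] 1 pr q q' by (simp add: sw_eq)
      next
        case 2
        obtain q where q: "ps ! k = q @ One j # u" using fq 2 by auto
        have "down r (ps ! k) (ps ! Suc k)" using 2 pr by (intro dn) simp
        then have "set q \<subseteq> {Two}"
          using downA[of r q j u "ps ! Suc k"] q pr 2 by (auto simp: form_def)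
        then have "down r (q @ Two # u) (q @ One j # u)"
          using assms(7,8) unfolding down_def by blast
        then show ?thesis using Fk[of k] Fk[of "Suc k"] 2 pr q by (simp add: sw_eq)
      next
        case 3
        have "down r (ps ! (k - 1)) (ps ! Suc (k - 1))" using 3 k lenF by (intro dn) simp
        then show ?thesis using Fk[of k] Fk[of "Suc k"] 3 k lenF by simp
      qed
    qed
    ultimately show "ps' \<in> P r x y2" unfolding ps' P_def by blast
  qed
  have inj: "inj_on F (P r x y1)"
  proof
    fix a b assume a: "a \<in> P r x y1" and b: "b \<in> P r x y1" and e: "F a = F b"
    have tchar: "tt ps = (LEAST k. form (F ps ! Suc k))" if ps: "ps \<in> P r x y1" for ps
    proof (rule Least_equality[symmetric])
      note pr = props[OF ps]
      show "form (F ps ! Suc (tt ps))" using Fn(1)[OF ps, of "Suc (tt ps)"] pr by simp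
      fix k assume fk: "form (F ps ! Suc k)"
      show "tt ps \<le> k"
      proof (rule ccontr)
        assume "\<not> tt ps \<le> k"
        then have "Suc k \<le> tt ps" by simp
        then obtain q where "ps ! Suc k = q @ One j # u" using pr unfolding form_def by blast
        then show False using fk Fn(1)[OF ps, of "Suc k"] pr \<open>Suc k \<le> tt ps\<close> nf2 by (simp add: sw_eq)
      qed
    qed
    have tq: "tt a = tt b" using tchar[OF a] tchar[OF b] e by simp
    have la: "length a = length b" using Fn(2)[OF a, of 0] Fn(2)[OF b, of 0] e by simp
    show "a = b"
    proof (rule nth_equalityI[OF la])
      fix m assume m: "m < length a"
      show "a ! m = b ! m"
      proof (cases "m \<le> tt a")
        case True
        obtain q where q: "a ! m = q @ One j # u" using props[OF a] True unfolding form_def by blast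
        obtain q' where q': "b ! m = q' @ One j # u" using props[OF b] True[unfolded tq] unfolding form_def by blast
        have "sw (a ! m) = sw (b ! m)" using Fn(1)[OF a, of m] Fn(1)[OF b, of m] e True tq m la by simp
        then show ?thesis using q q' by (simp add: sw_eq)
      next
        case False
        have "F a ! Suc m = F b ! Suc m" using e by simp
        then show ?thesis using Fn(1)[OF a, of "Suc m"] Fn(1)[OF b, of "Suc m"] False tq m la by simp
      qed
    qed
  qed
  have "card (P r x y1) \<le> card (P r x y2)"
    by (rule card_inj_on_le[OF inj img P_finite])
  then show ?thesis by (simp add: d_P x_def y1_def y2_def)
qed

end
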